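(* Let $d\ge1$, let $\mathcal{F}=\{1,\dots,d\}$ be partitioned into sets $\mathcal{D}$ (desirable features) and $\mathcal{U}$ (undesirable features), let $c\in\mathbb{R}^d$ with $c_f>0$ for all $f$, let $\mathbb{C}\in\mathbb{R}^{d\times d}$ be the contribution matrix of a causal graph and $h_0\in\mathbb{R}^d$ a classifier with $\mathbb{C}h_0\ge0$ componentwise, and let $\alpha>0$. Consider the agent's problem $$\min_{e\in\mathbb{R}^d,\ e\ge 0}\ c^\top e\quad\text{s.t.}\quad (\mathbb{C}h_0)^\top e\ge\alpha .$$ If there exists $f^\star\in\mathcal{D}$ such that $$\max_{f\in\mathcal{U}}\frac{(\mathbb{C}h_0)_f}{c_f}<\frac{(\mathbb{C}h_0)_{f^\star}}{c_{f^\star}},$$ then every optimal solution (best response) of this problem is a $\beta$-desirable effort profile for every $\beta\in(0,1]$.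
   Context: A causal graph is a weighted directed acyclic graph on $\mathcal{F}$ with adjacency matrix $A$ ($A_{ij}$ the weight of edge $i\to j$, $0$ if absent); its contribution matrix is $\mathbb{C}=\sum_{k=0}^{d}A^k$. The maximum over an empty set is $-\infty$. For $\beta\in(0,1]$, an effort profile $e\in\mathbb{R}^d$ is $\beta$-desirable if $\|e_{\mathcal{D}}\|_2\ge\beta\|e\|_2$, where $e_{\mathcal{D}}$ is the vector of coordinates of $e$ indexed by $\mathcal{D}$. *)

theory Defs
  imports "HOL-Analysis.Analysis"
begin

text \<open>Features are the elements of a finite type 'n (so d = CARD('n)).
  A causal graph is given by its weighted adjacency matrix A, where A $ i $ j is the
  weight of the edge i -> j (0 if absent); the graph must be acyclic.\<close>

definition causal_graph :: "real^'n^'n \<Rightarrow> bool" where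
  "causal_graph A \<longleftrightarrow> acyclic {(i, j). A $ i $ j \<noteq> 0}"

primrec mat_pow :: "real^'n^'n \<Rightarrow> nat \<Rightarrow> real^'n^'n" where
  "mat_pow A 0 = mat 1"
| "mat_pow A (Suc k) = A ** mat_pow A k"

definition contribution_matrix :: "real^'n^'n \<Rightarrow> real^'n^'n" where
  "contribution_matrix A = (\<Sum>k\<in>{0..CARD('n)}. mat_pow A k)"

definition beta_desirable :: "'n set \<Rightarrow> real \<Rightarrow> real^'n \<Rightarrow> bool" where
  "beta_desirable D \<beta> e \<longleftrightarrow> L2_set (\<lambda>i. e $ i) D \<ge> \<beta> * norm e"

definition agent_feasible :: "real^'n^'n \<Rightarrow> real^'n \<Rightarrow> real \<Rightarrow> real^'n \<Rightarrow> bool" where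
  "agent_feasible C h0 \<alpha> e \<longleftrightarrow> (\<forall>i. e $ i \<ge> 0) \<and> (C *v h0) \<bullet> e \<ge> \<alpha>"

definition best_response :: "real^'n \<Rightarrow> real^'n^'n \<Rightarrow> real^'n \<Rightarrow> real \<Rightarrow> real^'n \<Rightarrow> bool" where
  "best_response c C h0 \<alpha> e \<longleftrightarrow> agent_feasible C h0 \<alpha> e \<and>
     (\<forall>e'. agent_feasible C h0 \<alpha> e' \<longrightarrow> c \<bullet> e \<le> c \<bullet> e')"

end

theory Submission
  imports Defs
begin

lemma inner_ax: "(x::real^'n) \<bullet> axis k (1::real) = x $ k"
  by (simp add: inner_commute cart_eq_inner_axis)

theorem theorem1:
  fixes D U :: "'n::finite set"
    and c h0 :: "real^'n"
    and A :: "real^'n^'n"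
    and \<alpha> :: real
  assumes partition: "D \<union> U = UNIV" "D \<inter> U = {}"
    and c_pos: "\<forall>f. c $ f > 0"
    and graph: "causal_graph A"
    and h0_nonneg: "\<forall>f. (contribution_matrix A *v h0) $ f \<ge> 0"
    and alpha_pos: "\<alpha> > 0"
    and fstar: "\<exists>fs\<in>D. \<forall>f\<in>U.
        (contribution_matrix A *v h0) $ f / c $ f < (contribution_matrix A *v h0) $ fs / c $ fs"
  shows "\<forall>e. best_response c (contribution_matrix A) h0 \<alpha> e \<longrightarrow>
           (\<forall>\<beta>. 0 < \<beta> \<and> \<beta> \<le> 1 \<longrightarrow> beta_desirable D \<beta> e)"
proof (intro allI impI)
  fix e and \<beta> :: real assume br: "best_response c (contribution_matrix A) h0 \<alpha> e" and b: "0 < \<beta> \<and> \<beta> \<le> 1"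
  define v where "v = contribution_matrix A *v h0"
  obtain fs where fsD: "fs \<in> D" and fsr: "\<forall>f\<in>U. v $ f / c $ f < v $ fs / c $ fs"
    using fstar v_def by auto
  have feas: "\<forall>i. e $ i \<ge> 0" "v \<bullet> e \<ge> \<alpha>"
    using br unfolding best_response_def agent_feasible_def v_def by auto
  have opt: "\<And>e'. (\<forall>i. e' $ i \<ge> 0) \<Longrightarrow> v \<bullet> e' \<ge> \<alpha> \<Longrightarrow> c \<bullet> e \<le> c \<bullet> e'"
    using br unfolding best_response_def agent_feasible_def v_def by auto
  have zero: "e $ u = 0" if uU: "u \<in> U" for u
  proof (rule ccontr)
    assume "e $ u \<noteq> 0"
    with feas have eu: "e $ u > 0" by (metis less_eq_real_def)
    have ne: "u \<noteq> fs" using uU fsD partition(2) by auto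
    have cu: "c $ u > 0" and cf: "c $ fs > 0" using c_pos by auto
    have vu: "v $ u \<ge> 0" using h0_nonneg v_def by auto
    have r: "v $ u / c $ u < v $ fs / c $ fs" using fsr uU by auto
    have vf: "v $ fs > 0"
    proof -
      have "0 \<le> v $ u / c $ u" using vu cu by simp
      with r have "0 < v $ fs / c $ fs" by linarith
      with cf show ?thesis by (simp add: zero_less_divide_iff)
    qed
    have key: "c $ fs * v $ u < c $ u * v $ fs"
      using r cu cf by (simp add: divide_less_eq field_simps)
    define t where "t = e $ u * v $ u / v $ fs"
    have t0: "t \<ge> 0" unfolding t_def using eu vu vf by simp
    define e' where "e' = e + (- (e $ u)) *\<^sub>R axis u 1 + t *\<^sub>R axis fs 1"
    have comp: "e' $ i = e $ i + (if i = u then - e $ u else 0) + (if i = fs then t else 0)" for i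
      unfolding e'_def by (simp add: axis_def)
    have nn: "\<forall>i. e' $ i \<ge> 0" using comp feas t0 ne by auto
    have "v \<bullet> e' = v \<bullet> e - e $ u * v $ u + t * v $ fs"
      unfolding e'_def by (simp add: inner_add_right inner_ax algebra_simps)
    also have "t * v $ fs = e $ u * v $ u" unfolding t_def using vf by simp
    finally have ve: "v \<bullet> e' = v \<bullet> e" by simp
    have ce: "c \<bullet> e' = c \<bullet> e - e $ u * c $ u + t * c $ fs"
      unfolding e'_def by (simp add: inner_add_right inner_ax algebra_simps)
    have "t * c $ fs < e $ u * c $ u"
    proof -
      have "t * c $ fs * v $ fs = e $ u * (c $ fs * v $ u)" unfolding t_def using vf by simp
      also have "\<dots> < e $ u * (c $ u * v $ fs)" using key eu by simp
      finally have "t * c $ fs * v $ fs < (e $ u * c $ u) * v $ fs" by simp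
      with vf show ?thesis by (meson mult_less_cancel_right_pos)
    qed
    with ce have "c \<bullet> e' < c \<bullet> e" by simp
    moreover have "c \<bullet> e \<le> c \<bullet> e'" using opt nn ve feas by simp
    ultimately show False by simp
  qed
  have "norm e = L2_set (\<lambda>i. e $ i) UNIV" by (simp add: norm_vec_def L2_set_def)
  also have "\<dots> = L2_set (\<lambda>i. e $ i) D"
    unfolding L2_set_def
  proof (rule arg_cong[where f=sqrt], rule sum.mono_neutral_right)
    show "\<forall>i\<in>UNIV - D. (e $ i)\<^sup>2 = 0" using zero partition(1) by auto
  qed auto
  finally have "norm e = L2_set (\<lambda>i. e $ i) D" .
  moreover have "\<beta> * norm e \<le> norm e" using b by (simp add: mult_left_le_one_le)
  ultimately show "beta_desirable D \<beta> e" unfolding beta_desirable_def by simp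
qed

end
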